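(* Let $Q$ be a left automorphic loop, $S\le Q$, and let $g_i\in\mathrm{Mlt}_\lambda(Q)$ for $i\in I$. Set $H=\bigcap_{i\in I} g_i(S)$. Then for $x\in Q$, we have $x\in H$ if and only if $x\backslash H=\{x\backslash h : h\in H\}$ is a subloop of $Q$.
   Context: $L_x(y)=xy$; $\mathrm{Mlt}_\lambda(Q)=\langle L_x:x\in Q\rangle$; $\mathrm{Inn}_\lambda(Q)$ is the stabilizer of $1$ in $\mathrm{Mlt}_\lambda(Q)$. A loop is left automorphic if every element of $\mathrm{Inn}_\lambda(Q)$ is an automorphism of $Q$. Left division: $x\backslash y=L_x^{-1}(y)$. If $I=\emptyset$ the intersection is taken to be $Q$. *)

theory Defs
  imports Main
begin

definition loop :: "('a \<Rightarrow> 'a \<Rightarrow> 'a) \<Rightarrow> 'a \<Rightarrow> bool" where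
  "loop m e \<longleftrightarrow> (\<forall>x. m e x = x \<and> m x e = x)
     \<and> (\<forall>a b. \<exists>!x. m a x = b) \<and> (\<forall>a b. \<exists>!y. m y a = b)"

definition ldiv :: "('a \<Rightarrow> 'a \<Rightarrow> 'a) \<Rightarrow> 'a \<Rightarrow> 'a \<Rightarrow> 'a" where
  "ldiv m x y = (THE z. m x z = y)"

definition rdiv :: "('a \<Rightarrow> 'a \<Rightarrow> 'a) \<Rightarrow> 'a \<Rightarrow> 'a \<Rightarrow> 'a" where
  "rdiv m y x = (THE z. m z x = y)"

inductive_set Mlt_left :: "('a \<Rightarrow> 'a \<Rightarrow> 'a) \<Rightarrow> ('a \<Rightarrow> 'a) set" for m where
  id: "id \<in> Mlt_left m"
| L: "f \<in> Mlt_left m \<Longrightarrow> m x \<circ> f \<in> Mlt_left m"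
| Linv: "f \<in> Mlt_left m \<Longrightarrow> inv (m x) \<circ> f \<in> Mlt_left m"

definition Inn_left :: "('a \<Rightarrow> 'a \<Rightarrow> 'a) \<Rightarrow> 'a \<Rightarrow> ('a \<Rightarrow> 'a) set" where
  "Inn_left m e = {f \<in> Mlt_left m. f e = e}"

definition loop_aut :: "('a \<Rightarrow> 'a \<Rightarrow> 'a) \<Rightarrow> ('a \<Rightarrow> 'a) \<Rightarrow> bool" where
  "loop_aut m f \<longleftrightarrow> bij f \<and> (\<forall>x y. f (m x y) = m (f x) (f y))"

definition left_automorphic :: "('a \<Rightarrow> 'a \<Rightarrow> 'a) \<Rightarrow> 'a \<Rightarrow> bool" where
  "left_automorphic m e \<longleftrightarrow> loop m e \<and> (\<forall>f \<in> Inn_left m e. loop_aut m f)"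

definition subloop :: "('a \<Rightarrow> 'a \<Rightarrow> 'a) \<Rightarrow> 'a set \<Rightarrow> bool" where
  "subloop m S \<longleftrightarrow> S \<noteq> {} \<and> (\<forall>x\<in>S. \<forall>y\<in>S. m x y \<in> S \<and> ldiv m x y \<in> S \<and> rdiv m x y \<in> S)"

end

theory Submission
  imports Defs
begin

lemma lp_ldiv1: "loop m e \<Longrightarrow> m x (ldiv m x y) = y"
  unfolding ldiv_def by (rule theI') (simp add: loop_def)
lemma lp_ldiv2: "loop m e \<Longrightarrow> ldiv m x (m x y) = y"
  unfolding ldiv_def by (rule the1_equality) (auto simp: loop_def)
lemma lp_ldiv_uniq: "loop m e \<Longrightarrow> m x z = y \<Longrightarrow> ldiv m x y = z"
  using lp_ldiv2 by metis
lemma lp_rdiv1: "loop m e \<Longrightarrow> m (rdiv m y x) x = y"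
  unfolding rdiv_def by (rule theI') (simp add: loop_def)
lemma lp_rdiv_uniq: "loop m e \<Longrightarrow> m z x = y \<Longrightarrow> rdiv m y x = z"
  unfolding rdiv_def by (rule the1_equality) (auto simp: loop_def)

lemma lp_e: "loop m e \<Longrightarrow> m x e = x" "loop m e \<Longrightarrow> m e x = x"
  unfolding loop_def by auto

lemma lp_bij: "loop m e \<Longrightarrow> bij (m x)"
  unfolding bij_def inj_def surj_def by (metis lp_ldiv1 lp_ldiv2)

lemma lp_inv: "loop m e \<Longrightarrow> inv (m x) = ldiv m x"
  by (metis (no_types, lifting) bij_inv_eq_iff ext lp_bij lp_ldiv1)

lemma mlt_comp: "f \<in> Mlt_left m \<Longrightarrow> h \<in> Mlt_left m \<Longrightarrow> f \<circ> h \<in> Mlt_left m"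
  by (induction f rule: Mlt_left.induct) (auto simp: comp_assoc intro: Mlt_left.intros)

lemma mlt_L: "m s \<in> Mlt_left m"
  using Mlt_left.L[OF Mlt_left.id, of m s] by simp

lemma sub_e: "subloop m T \<Longrightarrow> loop m e \<Longrightarrow> e \<in> T"
  unfolding subloop_def by (metis ex_in_conv lp_e(1) lp_ldiv_uniq)

lemma sub_L: "subloop m S \<Longrightarrow> loop m e \<Longrightarrow> s \<in> S \<Longrightarrow> m s ` S = S"
  unfolding subloop_def by (auto simp: image_iff) (metis lp_ldiv1)

lemma aut_sub: "loop m e \<Longrightarrow> loop_aut m f \<Longrightarrow> subloop m S \<Longrightarrow> subloop m (f ` S)"
proof -
  assume L: "loop m e" and A: "loop_aut m f" and S: "subloop m S"
  have hom: "\<And>x y. f (m x y) = m (f x) (f y)" using A unfolding loop_aut_def by auto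
  have ld: "\<And>a b. ldiv m (f a) (f b) = f (ldiv m a b)"
    by (rule lp_ldiv_uniq[OF L]) (simp add: hom[symmetric] lp_ldiv1[OF L])
  have rd: "\<And>a b. rdiv m (f a) (f b) = f (rdiv m a b)"
    by (rule lp_rdiv_uniq[OF L]) (simp add: hom[symmetric] lp_rdiv1[OF L])
  show ?thesis using S unfolding subloop_def by (auto simp: hom[symmetric] ld rd)
qed

lemma ldiv_img: "loop m e \<Longrightarrow> ldiv m x ` A = {y. m x y \<in> A}"
  by (auto simp: lp_ldiv1 lp_ldiv2 image_iff) (metis lp_ldiv2)

theorem lemma6p5:
  fixes m :: "'a \<Rightarrow> 'a \<Rightarrow> 'a" and e :: 'a and S :: "'a set"
    and I :: "'i set" and g :: "'i \<Rightarrow> 'a \<Rightarrow> 'a" and H :: "'a set" and x :: 'a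
  assumes "left_automorphic m e"
    and "subloop m S"
    and "\<forall>i\<in>I. g i \<in> Mlt_left m"
    and "H = (\<Inter>i\<in>I. g i ` S)"
  shows "x \<in> H \<longleftrightarrow> subloop m ((\<lambda>h. ldiv m x h) ` H)"
proof
  have L: "loop m e" using assms(1) unfolding left_automorphic_def by auto
  have aut: "\<And>f. f \<in> Mlt_left m \<Longrightarrow> f e = e \<Longrightarrow> loop_aut m f"
    using assms(1) unfolding left_automorphic_def Inn_left_def by auto
  assume xH: "x \<in> H"
  have key: "\<exists>T. subloop m T \<and> ldiv m x ` (g i ` S) = T" if i: "i \<in> I" for i
  proof -
    from xH i assms(4) obtain s where s: "s \<in> S" "x = g i s" by auto
    define \<psi> where "\<psi> = inv (m x) \<circ> (g i \<circ> m s)"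
    have "\<psi> \<in> Mlt_left m" unfolding \<psi>_def
      by (rule Mlt_left.Linv, rule mlt_comp) (use assms(3) i mlt_L in auto)
    moreover have "\<psi> e = e"
    proof -
      have "\<psi> e = ldiv m x (g i (m s e))" unfolding \<psi>_def by (simp add: lp_inv[OF L])
      also have "\<dots> = ldiv m x x" using s by (simp add: lp_e[OF L])
      also have "\<dots> = e" by (rule lp_ldiv_uniq[OF L lp_e(1)[OF L]])
      finally show ?thesis .
    qed
    ultimately have "loop_aut m \<psi>" by (rule aut)
    hence "subloop m (\<psi> ` S)" by (rule aut_sub[OF L _ assms(2)])
    moreover have "\<psi> ` S = ldiv m x ` (g i ` S)"
    proof -
      have "\<psi> ` S = ldiv m x ` (g i ` (m s ` S))" unfolding \<psi>_def lp_inv[OF L]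
        by (simp only: image_comp)
      thus ?thesis using sub_L[OF assms(2) L s(1)] by simp
    qed
    ultimately show ?thesis by auto
  qed
  define T where "T i = ldiv m x ` (g i ` S)" for i
  have T: "\<And>i. i \<in> I \<Longrightarrow> subloop m (T i) \<and> ldiv m x ` (g i ` S) = T i"
    using key unfolding T_def by blast
  have "ldiv m x ` H = {y. \<forall>i\<in>I. m x y \<in> g i ` S}"
    unfolding assms(4) ldiv_img[OF L] by blast
  also have "\<dots> = (\<Inter>i\<in>I. T i)"
  proof -
    have "\<And>i. i \<in> I \<Longrightarrow> T i = {y. m x y \<in> g i ` S}" using T ldiv_img[OF L] by metis
    thus ?thesis by blast
  qed
  finally have eq: "ldiv m x ` H = (\<Inter>i\<in>I. T i)" .
  have Te: "\<And>i. i \<in> I \<Longrightarrow> e \<in> T i" using T sub_e[OF _ L] by blast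
  have "subloop m (\<Inter>i\<in>I. T i)"
    unfolding subloop_def
  proof (intro conjI ballI)
    show "(\<Inter>i\<in>I. T i) \<noteq> {}" using Te by blast
  next
    fix a b assume a: "a \<in> (\<Inter>i\<in>I. T i)" and b: "b \<in> (\<Inter>i\<in>I. T i)"
    have "\<And>i. i \<in> I \<Longrightarrow> subloop m (T i)" using T by blast
    then show "m a b \<in> (\<Inter>i\<in>I. T i)" "ldiv m a b \<in> (\<Inter>i\<in>I. T i)"
      "rdiv m a b \<in> (\<Inter>i\<in>I. T i)" using a b unfolding subloop_def by blast+
  qed
  with eq show "subloop m ((\<lambda>h. ldiv m x h) ` H)" by simp
next
  have L: "loop m e" using assms(1) unfolding left_automorphic_def by auto
  assume "subloop m ((\<lambda>h. ldiv m x h) ` H)"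
  then have "e \<in> ldiv m x ` H" by (rule sub_e[OF _ L])
  then obtain h where "h \<in> H" "ldiv m x h = e" by auto
  then show "x \<in> H" by (metis L lp_e(1) lp_ldiv1)
qed

end
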